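(* Let $\mathcal H_A,\mathcal H_B$ be complex Hilbert spaces of finite dimensions $d_A,d_B$, let $\rho_{AB}$ be a positive definite density matrix on $\mathcal H_A\otimes\mathcal H_B$, let $\rho_A=\mathrm{tr}_B(\rho_{AB})$ be its partial trace over $B$, and let $\alpha>1$. Define \[ I_\alpha(A;B)_\rho=\inf_{\sigma_B} D_\alpha(\rho_{AB}\,\|\,\rho_A\otimes\sigma_B), \] where the infimum is over positive definite density matrices $\sigma_B$ on $\mathcal H_B$ and $D_\alpha(\rho\|\sigma)=\frac{1}{\alpha-1}\log\mathrm{tr}\,[\rho^\alpha\sigma^{1-\alpha}]$. Then \[ I_\alpha(A;B)_\rho\ \ge\ \frac{\alpha}{\alpha-1}\Big(\log(d_Ad_B)+\frac{1}{d_Ad_B}\log\det(\rho_{AB})\Big). \]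
   Context: A density matrix is a Hermitian positive semidefinite matrix with trace $1$. Real powers of positive definite matrices are defined by functional calculus. $\log$ denotes the logarithm to a fixed base greater than $1$. *)

theory Defs
  imports "Jordan_Normal_Form.Schur_Decomposition" "Jordan_Normal_Form.Determinant"
begin

(* Hilbert spaces C^n; operators are complex n x n matrices (carrier_mat n n). *)

definition mtrace :: "complex mat \<Rightarrow> complex" where
  "mtrace A = (\<Sum>i<dim_row A. A $$ (i, i))"

definition hermitian_mat :: "complex mat \<Rightarrow> bool" where
  "hermitian_mat A \<longleftrightarrow> A \<in> carrier_mat (dim_row A) (dim_row A) \<and> mat_adjoint A = A"

definition pos_def_mat :: "nat \<Rightarrow> complex mat \<Rightarrow> bool" where
  "pos_def_mat n A \<longleftrightarrow> A \<in> carrier_mat n n \<and> hermitian_mat A \<and>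
     (\<forall>v \<in> carrier_vec n. v \<noteq> 0\<^sub>v n \<longrightarrow> 0 < Re (conjugate v \<bullet> (A *\<^sub>v v)))"

definition pos_semidef_mat :: "nat \<Rightarrow> complex mat \<Rightarrow> bool" where
  "pos_semidef_mat n A \<longleftrightarrow> A \<in> carrier_mat n n \<and> hermitian_mat A \<and>
     (\<forall>v \<in> carrier_vec n. 0 \<le> Re (conjugate v \<bullet> (A *\<^sub>v v)))"

definition density_mat :: "nat \<Rightarrow> complex mat \<Rightarrow> bool" where
  "density_mat n A \<longleftrightarrow> pos_semidef_mat n A \<and> mtrace A = 1"

definition real_diag_mat :: "nat \<Rightarrow> (nat \<Rightarrow> real) \<Rightarrow> complex mat" where
  "real_diag_mat n l = mat n n (\<lambda>(i,j). if i = j then complex_of_real (l i) else 0)"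

definition unitary_mat :: "nat \<Rightarrow> complex mat \<Rightarrow> bool" where
  "unitary_mat n U \<longleftrightarrow> U \<in> carrier_mat n n \<and> U * mat_adjoint U = 1\<^sub>m n"

definition mat_powr :: "complex mat \<Rightarrow> real \<Rightarrow> complex mat" where
  "mat_powr A t = (let n = dim_row A in
     (SOME B. \<exists>U l. unitary_mat n U \<and> (\<forall>i<n. 0 < l i) \<and>
        A = U * real_diag_mat n l * mat_adjoint U \<and>
        B = U * real_diag_mat n (\<lambda>i. l i powr t) * mat_adjoint U))"

text \<open>Tensor (Kronecker) product; basis |i> (x) |k> of C^dA (x) C^dB is index i*dB + k.\<close>
definition kron_mat :: "complex mat \<Rightarrow> complex mat \<Rightarrow> complex mat" where
  "kron_mat A B = mat (dim_row A * dim_row B) (dim_col A * dim_col B)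
     (\<lambda>(i,j). A $$ (i div dim_row B, j div dim_col B) * B $$ (i mod dim_row B, j mod dim_col B))"

definition ptrace_B :: "nat \<Rightarrow> nat \<Rightarrow> complex mat \<Rightarrow> complex mat" where
  "ptrace_B dA dB R = mat dA dA (\<lambda>(i,j). \<Sum>k<dB. R $$ (i * dB + k, j * dB + k))"

definition renyi_div :: "real \<Rightarrow> real \<Rightarrow> complex mat \<Rightarrow> complex mat \<Rightarrow> real" where
  "renyi_div b \<alpha> \<rho> \<sigma> = 1 / (\<alpha> - 1) * log b (Re (mtrace (mat_powr \<rho> \<alpha> * mat_powr \<sigma> (1 - \<alpha>))))"

definition renyi_MI :: "real \<Rightarrow> real \<Rightarrow> nat \<Rightarrow> nat \<Rightarrow> complex mat \<Rightarrow> real" where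
  "renyi_MI b \<alpha> dA dB \<rho> = (INF \<sigma> \<in> {\<sigma>. pos_def_mat dB \<sigma> \<and> density_mat dB \<sigma>}.
      renyi_div b \<alpha> \<rho> (kron_mat (ptrace_B dA dB \<rho>) \<sigma>))"

end

theory Submission
  imports Defs "Jordan_Normal_Form.Spectral_Radius"
begin


lemma adj_dim[simp]: "dim_row (mat_adjoint A) = dim_col A" "dim_col (mat_adjoint A) = dim_row A"
  unfolding mat_adjoint_def by (auto simp: mat_of_rows_def)

lemma adj_idx[simp]: "i < dim_col A \<Longrightarrow> j < dim_row A \<Longrightarrow> mat_adjoint A $$ (i,j) = cnj (A $$ (j,i))"
  unfolding mat_adjoint_def by (auto simp: mat_of_rows_def)

lemma adj_carrier[simp]: "A \<in> carrier_mat n m \<Longrightarrow> mat_adjoint A \<in> carrier_mat m n"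
  by (intro carrier_matI) auto

lemma mult_idx: "i < dim_row A \<Longrightarrow> j < dim_col B \<Longrightarrow> dim_col A = dim_row B \<Longrightarrow>
  (A * B) $$ (i,j) = (\<Sum>k<dim_col A. A $$ (i,k) * B $$ (k,j))"
  by (simp add: scalar_prod_def lessThan_atLeast0)

lemma mult_idx_c: "A \<in> carrier_mat n k \<Longrightarrow> B \<in> carrier_mat k m \<Longrightarrow> i < n \<Longrightarrow> j < m \<Longrightarrow>
  (A * B) $$ (i,j) = (\<Sum>c<k. A $$ (i,c) * B $$ (c,j))"
  by (subst mult_idx) auto

lemma adj_adj[simp]: "mat_adjoint (mat_adjoint (A::complex mat)) = A"
  by (rule eq_matI, auto)

lemma adj_one[simp]: "mat_adjoint (1\<^sub>m n :: complex mat) = 1\<^sub>m n"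
  by (rule eq_matI, auto)

lemma adj_mult: "A \<in> carrier_mat n k \<Longrightarrow> B \<in> carrier_mat k m \<Longrightarrow>
  mat_adjoint (A * (B::complex mat)) = mat_adjoint B * mat_adjoint A"
  apply (rule eq_matI)
  by (auto simp del: index_mult_mat simp add: mult_idx mult.commute index_mult_mat(2,3) intro!: sum.cong)


lemma cscal: "v \<in> carrier_vec n \<Longrightarrow> w \<in> carrier_vec n \<Longrightarrow> v \<bullet>c (w::complex vec) = (\<Sum>i<n. v$i * cnj (w$i))"
  by (auto simp: scalar_prod_def lessThan_atLeast0)

lemma spectral:
  fixes A :: "complex mat"
  assumes "A \<in> carrier_mat n n" "mat_adjoint A = A"
  shows "\<exists>U. U \<in> carrier_mat n n \<and> U * mat_adjoint U = 1\<^sub>m n \<and> mat_adjoint U * U = 1\<^sub>m n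
     \<and> diagonal_mat (mat_adjoint U * A * U)"
  using assms
proof (induction n arbitrary: A)
  case 0
  then show ?case by (intro exI[of _ "1\<^sub>m 0"]) (auto simp: diagonal_mat_def)
next
  case (Suc m A)
  define n where "n = Suc m"
  have n0: "0 < n" using n_def by simp
  have A: "A \<in> carrier_mat n n" and hA: "mat_adjoint A = A" using Suc.prems n_def by auto
  obtain e where "e \<in> spectrum A" using spectrum_non_empty[OF A] n_def by auto
  then obtain v where ev: "eigenvector A v e" unfolding spectrum_def eigenvalue_def by auto
  hence v: "v \<in> carrier_vec n" and v0: "v \<noteq> 0\<^sub>v n" and Av: "A *\<^sub>v v = e \<cdot>\<^sub>v v"
    using A unfolding eigenvector_def by auto
  interpret cof_vec_space n "TYPE(complex)" .
  define b where "b = basis_completion v"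
  from basis_completion[OF v v0, folded b_def]
  have dist_b: "distinct b" and indep: "\<not> lin_dep (set b)" and b: "set b \<subseteq> carrier_vec n"
    and hdb: "hd b = v" and len_b: "length b = n" by auto
  from hdb len_b n_def obtain vs where bv: "b = v # vs" by (cases b, auto)
  define ws where "ws = gram_schmidt n b"
  from gram_schmidt_result[OF b dist_b indep refl, folded ws_def]
  have ws: "set ws \<subseteq> carrier_vec n" "corthogonal ws" "length ws = n" by (auto simp: len_b)
  from gram_schmidt_hd[OF v, of vs, folded bv] have hdws: "hd ws = v" unfolding ws_def .
  have ws0: "ws ! 0 = v" using hdws ws(3) n_def by (cases ws) auto
  have wsc: "ws ! j \<in> carrier_vec n" if "j < n" for j using ws that by auto
  define nr where "nr j = sqrt (\<Sum>k<n. (cmod (ws!j $ k))^2)" for j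
  have nrpos: "nr j > 0" if j: "j < n" for j
  proof -
    have "ws!j \<bullet>c ws!j \<noteq> 0" using corthogonalD[OF ws(2)] j ws(3) by auto
    then obtain k where k: "k < n" "ws!j $ k \<noteq> 0"
    proof -
      assume *: "\<And>k. k < n \<Longrightarrow> ws!j $ k \<noteq> 0 \<Longrightarrow> thesis"
      show thesis
      proof (rule ccontr)
        assume "\<not> thesis"
        hence "\<forall>k<n. ws!j $ k = 0" using * by blast
        hence "ws!j \<bullet>c ws!j = 0" using cscal[OF wsc[OF j] wsc[OF j]] by simp
        thus False using `ws!j \<bullet>c ws!j \<noteq> 0` by simp
      qed
    qed
    have "0 < (\<Sum>k<n. (cmod (ws!j $ k))^2)"
      by (rule sum_pos2[of _ k]) (use k in auto)
    thus ?thesis unfolding nr_def by auto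
  qed
  have nrsq: "complex_of_real (nr j) * complex_of_real (nr j) = (\<Sum>k<n. cnj (ws!j $ k) * ws!j $ k)" if j: "j < n" for j
  proof -
    have "complex_of_real (nr j) * complex_of_real (nr j) = complex_of_real ((\<Sum>k<n. (cmod (ws!j $ k))^2))"
      unfolding nr_def of_real_mult[symmetric] by (subst real_sqrt_mult_self) (simp add: sum_nonneg)
    also have "\<dots> = (\<Sum>k<n. cnj (ws!j $ k) * ws!j $ k)"
      unfolding of_real_sum by (intro sum.cong refl) (metis complex_norm_square mult.commute)
    finally show ?thesis .
  qed
  define W where "W = mat n n (\<lambda>(i,j). ws!j $ i / complex_of_real (nr j))"
  have W: "W \<in> carrier_mat n n" unfolding W_def by auto
  have WW: "mat_adjoint W * W = 1\<^sub>m n"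
  proof (rule eq_matI)
    fix i j assume "i < dim_row (1\<^sub>m n)" "j < dim_col (1\<^sub>m n)"
    hence i: "i < n" and j: "j < n" by auto
    have "(mat_adjoint W * W) $$ (i,j) = (\<Sum>k<n. cnj (ws!i $ k) * ws!j $ k) / (complex_of_real (nr i) * complex_of_real (nr j))"
      using i j W by (simp add: mult_idx W_def sum_divide_distrib index_mult_mat(2,3) del: index_mult_mat)
    also have "\<dots> = 1\<^sub>m n $$ (i,j)"
    proof (cases "i = j")
      case True thus ?thesis using nrsq[OF i, symmetric] nrpos[OF i] i by simp
    next
      case False
      have "ws!j \<bullet>c ws!i = 0" using corthogonalD[OF ws(2)] i j ws(3) False by auto
      hence "(\<Sum>k<n. cnj (ws!i $ k) * ws!j $ k) = 0" using cscal[OF wsc[OF j] wsc[OF i]]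
        by (simp add: mult.commute)
      thus ?thesis using False i j by simp
    qed
    finally show "(mat_adjoint W * W) $$ (i,j) = 1\<^sub>m n $$ (i,j)" .
  qed (use W in auto)
  have WW': "W * mat_adjoint W = 1\<^sub>m n"
    using mat_mult_left_right_inverse[OF _ W WW] W by auto
  have AW0: "(A * W) $$ (k, 0) = e * W $$ (k,0)" if k: "k < n" for k
  proof -
    have "(A * W) $$ (k, 0) = (\<Sum>l<n. A $$ (k,l) * v $ l) / complex_of_real (nr 0)"
      using k A W n0 by (simp add: mult_idx W_def ws0 sum_divide_distrib index_mult_mat(2,3) del: index_mult_mat)
    also have "(\<Sum>l<n. A $$ (k,l) * v $ l) = (A *\<^sub>v v) $ k"
      using k A v by (simp add: scalar_prod_def lessThan_atLeast0)
    also have "\<dots> = e * v $ k" using Av k v by simp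
    finally show ?thesis using k n0 by (simp add: W_def ws0)
  qed
  define A' where "A' = mat_adjoint W * A * W"
  have A': "A' \<in> carrier_mat n n" unfolding A'_def using W A by auto
  have hA': "mat_adjoint A' = A'"
    unfolding A'_def using W A hA by (simp add: adj_mult[of _ n n _ n] assoc_mult_mat[of _ n n _ n _ n] mult_carrier_mat[of _ n n _ n])
  have A'col: "A' $$ (i,0) = 0" if "i < n" "i \<noteq> 0" for i
  proof -
    have "A' $$ (i,0) = (mat_adjoint W * (A * W)) $$ (i,0)"
      unfolding A'_def using W A by (simp add: assoc_mult_mat[of _ n n _ n _ n] mult_carrier_mat[of _ n n _ n])
    also have "\<dots> = (\<Sum>k<n. mat_adjoint W $$ (i,k) * (e * W $$ (k,0)))"
      using that W A n0 by (subst mult_idx) (auto simp del: index_mult_mat simp: AW0 index_mult_mat(2,3) intro!: sum.cong)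
    also have "\<dots> = e * (mat_adjoint W * W) $$ (i,0)"
      using that W A n0 by (simp add: mult_idx sum_distrib_left mult.assoc mult.left_commute index_mult_mat(2,3) del: index_mult_mat)
    also have "\<dots> = 0" using WW that n0 by simp
    finally show ?thesis .
  qed
  have A'row: "A' $$ (0,j) = 0" if "j < n" "j \<noteq> 0" for j
  proof -
    have "A' $$ (0,j) = mat_adjoint A' $$ (0,j)" using hA' by simp
    also have "\<dots> = 0" using A' that n0 A'col by simp
    finally show ?thesis .
  qed
  define A3 where "A3 = mat m m (\<lambda>(i,j). A' $$ (Suc i, Suc j))"
  have A3: "A3 \<in> carrier_mat m m" unfolding A3_def by auto
  have hA3: "mat_adjoint A3 = A3"
  proof (rule eq_matI)
    fix i j assume "i < dim_row A3" "j < dim_col A3"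
    hence ij: "i < m" "j < m" using A3 by auto
    have "mat_adjoint A3 $$ (i,j) = mat_adjoint A' $$ (Suc i, Suc j)" 
      using ij A3 A' n_def by (simp add: A3_def)
    thus "mat_adjoint A3 $$ (i,j) = A3 $$ (i,j)" using hA' ij by (simp add: A3_def)
  qed (use A3 in auto)
  from Suc.IH[OF A3 hA3] obtain U3 where U3: "U3 \<in> carrier_mat m m" and U3a: "U3 * mat_adjoint U3 = 1\<^sub>m m"
    and U3b: "mat_adjoint U3 * U3 = 1\<^sub>m m" and U3d: "diagonal_mat (mat_adjoint U3 * A3 * U3)" by blast
  define F where "F = four_block_mat (1\<^sub>m 1) (0\<^sub>m 1 m) (0\<^sub>m m 1) U3"
  have F: "F \<in> carrier_mat n n" unfolding F_def n_def using U3 by auto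
  have adjF: "mat_adjoint F = four_block_mat (1\<^sub>m 1) (0\<^sub>m 1 m) (0\<^sub>m m 1) (mat_adjoint U3)"
    by (rule eq_matI) (use U3 in \<open>auto simp: F_def\<close>)
  have FF: "F * mat_adjoint F = 1\<^sub>m n" unfolding adjF unfolding F_def n_def
    by (subst mult_four_block_mat[of _ 1 1 _ m _ m _ _ 1 _ m]) (use U3 U3a in auto)
  have FF': "mat_adjoint F * F = 1\<^sub>m n" unfolding adjF unfolding F_def n_def
    by (subst mult_four_block_mat[of _ 1 1 _ m _ m _ _ 1 _ m]) (use U3 U3b in auto)
  define a where "a = A' $$ (0,0)"
  have A'blk: "A' = four_block_mat (mat 1 1 (\<lambda>_. a)) (0\<^sub>m 1 m) (0\<^sub>m m 1) A3"
  proof (rule eq_matI)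
    fix i j assume ij: "i < dim_row (four_block_mat (mat 1 1 (\<lambda>_. a)) (0\<^sub>m 1 m) (0\<^sub>m m 1) A3)"
      "j < dim_col (four_block_mat (mat 1 1 (\<lambda>_. a)) (0\<^sub>m 1 m) (0\<^sub>m m 1) A3)"
    hence ij': "i < n" "j < n" using A3 n_def by auto
    show "A' $$ (i,j) = four_block_mat (mat 1 1 (\<lambda>_. a)) (0\<^sub>m 1 m) (0\<^sub>m m 1) A3 $$ (i,j)"
      using ij A3 A'row[OF ij'(2)] A'col[OF ij'(1)] ij'
      by (cases i; cases j) (auto simp: a_def A3_def)
  qed (use A3 A' n_def in auto)
  have FA: "mat_adjoint F * A' = four_block_mat (mat 1 1 (\<lambda>_. a)) (0\<^sub>m 1 m) (0\<^sub>m m 1) (mat_adjoint U3 * A3)"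
    unfolding adjF A'blk by (subst mult_four_block_mat[of _ 1 1 _ m _ m _ _ 1 _ m]) (use U3 A3 in auto)
  have FAF: "mat_adjoint F * A' * F = four_block_mat (mat 1 1 (\<lambda>_. a)) (0\<^sub>m 1 m) (0\<^sub>m m 1) (mat_adjoint U3 * A3 * U3)"
    unfolding FA unfolding F_def by (subst mult_four_block_mat[of _ 1 1 _ m _ m _ _ 1 _ m]) (use U3 A3 in auto)
  define U where "U = W * F"
  have U: "U \<in> carrier_mat n n" unfolding U_def using W F by auto
  have adjU: "mat_adjoint U = mat_adjoint F * mat_adjoint W" unfolding U_def using W F by (simp add: adj_mult)
  have "U * mat_adjoint U = W * (F * mat_adjoint F) * mat_adjoint W"
    unfolding U_def using W F by (simp add: adj_mult[OF W F] assoc_mult_mat[of _ n n _ n _ n] mult_carrier_mat[of _ n n _ n])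
  hence UU: "U * mat_adjoint U = 1\<^sub>m n" using FF WW' W by simp
  have "mat_adjoint U * U = mat_adjoint F * (mat_adjoint W * W) * F"
    unfolding U_def using W F by (simp add: adj_mult[OF W F] assoc_mult_mat[of _ n n _ n _ n] mult_carrier_mat[of _ n n _ n])
  hence UU': "mat_adjoint U * U = 1\<^sub>m n" using FF' WW F by simp
  have "mat_adjoint U * A * U = mat_adjoint F * A' * F"
    unfolding U_def A'_def using W F A by (simp add: adj_mult[OF W F] assoc_mult_mat[of _ n n _ n _ n] mult_carrier_mat[of _ n n _ n])
  hence "diagonal_mat (mat_adjoint U * A * U)" unfolding FAF using U3d U3 A3
    by (auto simp: diagonal_mat_def)
  with U UU UU' show ?case unfolding n_def by blast
qed



lemma unitary_adj: "unitary_mat n U \<Longrightarrow> mat_adjoint U * U = 1\<^sub>m n"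
  unfolding unitary_mat_def using mat_mult_left_right_inverse[of U n "mat_adjoint U"] by auto

lemma rdiag_carrier[simp]: "real_diag_mat n l \<in> carrier_mat n n"
  unfolding real_diag_mat_def by auto

lemma rdiag_dim[simp]: "dim_row (real_diag_mat n l) = n" "dim_col (real_diag_mat n l) = n"
  unfolding real_diag_mat_def by auto

lemma decomp_idx:
  assumes U: "U \<in> carrier_mat n n" and a: "a < n" and b: "b < n"
  shows "(U * real_diag_mat n l * mat_adjoint U) $$ (a,b) = (\<Sum>i<n. U$$(a,i) * complex_of_real (l i) * cnj (U$$(b,i)))"
proof -
  have "(U * real_diag_mat n l * mat_adjoint U) $$ (a,b) = (\<Sum>k<n. (U * real_diag_mat n l) $$ (a,k) * cnj (U$$(b,k)))"
    using U a b by (subst mult_idx) (auto simp del: index_mult_mat simp: index_mult_mat(2,3))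
  also have "\<dots> = (\<Sum>k<n. (\<Sum>i<n. U$$(a,i) * real_diag_mat n l $$ (i,k)) * cnj (U$$(b,k)))"
    using U a b by (intro sum.cong refl, subst mult_idx) (auto simp del: index_mult_mat simp: index_mult_mat(2,3))
  also have "\<dots> = (\<Sum>k<n. U$$(a,k) * complex_of_real (l k) * cnj (U$$(b,k)))"
    by (intro sum.cong refl) (simp add: real_diag_mat_def if_distrib cong: if_cong)
  finally show ?thesis .
qed

lemma real_of_cnj: "cnj z = z \<Longrightarrow> z = complex_of_real (Re z)"
  by (simp add: complex_eq_iff)

lemma posdef_decomp:
  assumes "pos_def_mat n A"
  shows "\<exists>U l. unitary_mat n U \<and> (\<forall>i<n. 0 < l i) \<and> A = U * real_diag_mat n l * mat_adjoint U"
proof -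
  have A: "A \<in> carrier_mat n n" and hA: "mat_adjoint A = A"
    and pos: "\<And>v. v \<in> carrier_vec n \<Longrightarrow> v \<noteq> 0\<^sub>v n \<Longrightarrow> 0 < Re (conjugate v \<bullet> (A *\<^sub>v v))"
    using assms unfolding pos_def_mat_def hermitian_mat_def by auto
  obtain U where U: "U \<in> carrier_mat n n" and UU: "U * mat_adjoint U = 1\<^sub>m n"
    and UU': "mat_adjoint U * U = 1\<^sub>m n" and dg: "diagonal_mat (mat_adjoint U * A * U)"
    using spectral[OF A hA] by blast
  define D where "D = mat_adjoint U * A * U"
  have D: "D \<in> carrier_mat n n" unfolding D_def using U A by auto
  have hD: "mat_adjoint D = D" unfolding D_def using U A hA
    by (simp add: adj_mult[of _ n n _ n] assoc_mult_mat[of _ n n _ n _ n] mult_carrier_mat[of _ n n _ n])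
  have Dii: "D $$ (i,i) = conjugate (col U i) \<bullet> (A *\<^sub>v col U i)" if i: "i < n" for i
  proof -
    have "D = mat_adjoint U * (A * U)" unfolding D_def using U A by (simp add: assoc_mult_mat[of _ n n _ n _ n])
    moreover have "(mat_adjoint U * (A * U)) $$ (i,i) = (\<Sum>k<dim_col (mat_adjoint U). mat_adjoint U $$ (i,k) * (A*U) $$ (k,i))"
      by (rule mult_idx) (use U A i in auto)
    ultimately have "D $$ (i,i) = (\<Sum>k<n. cnj (U $$ (k,i)) * (A * U) $$ (k,i))"
      using U A i by (auto simp del: index_mult_mat intro!: sum.cong)
    also have "\<dots> = conjugate (col U i) \<bullet> (A *\<^sub>v col U i)"
      using U A i by (auto simp: scalar_prod_def lessThan_atLeast0 intro!: sum.cong)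
    finally show ?thesis .
  qed
  have Dpos: "0 < Re (D $$ (i,i))" if i: "i < n" for i
  proof -
    have c: "col U i \<in> carrier_vec n" using U by auto
    have "col U i \<noteq> 0\<^sub>v n"
    proof
      assume z: "col U i = 0\<^sub>v n"
      have "(mat_adjoint U * U) $$ (i,i) = (\<Sum>k<n. cnj (U $$ (k,i)) * U $$ (k,i))"
        using U i by (simp add: mult_idx index_mult_mat(2,3) del: index_mult_mat)
      also have "\<dots> = 0"
      proof (intro sum.neutral ballI)
        fix k assume "k \<in> {..<n}"
        hence "U $$ (k,i) = col U i $ k" using U i by auto
        thus "cnj (U $$ (k,i)) * U $$ (k,i) = 0" using z \<open>k \<in> {..<n}\<close> by simp
      qed
      finally show False using UU' i by simp
    qed
    thus ?thesis using pos[OF c] Dii[OF i] by simp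
  qed
  define l where "l i = Re (D $$ (i,i))" for i
  have Dl: "D = real_diag_mat n l"
  proof (rule eq_matI)
    fix i j assume "i < dim_row (real_diag_mat n l)" "j < dim_col (real_diag_mat n l)"
    hence i: "i < n" and j: "j < n" by (auto simp: real_diag_mat_def)
    show "D $$ (i,j) = real_diag_mat n l $$ (i,j)"
    proof (cases "i = j")
      case True
      have "cnj (D $$ (i,i)) = D $$ (i,i)" using arg_cong[OF hD, of "\<lambda>M. M $$ (i,i)"] D i by simp
      then show ?thesis using True i by (simp add: real_diag_mat_def l_def real_of_cnj[symmetric])
    next
      case False
      then show ?thesis using dg i j D unfolding D_def[symmetric] diagonal_mat_def
        by (auto simp: real_diag_mat_def)
    qed
  qed (use D in \<open>auto simp: real_diag_mat_def\<close>)
  have "U * D * mat_adjoint U = (U * mat_adjoint U) * A * (U * mat_adjoint U)"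
    unfolding D_def using U A
    by (simp add: assoc_mult_mat[of _ n n _ n _ n] mult_carrier_mat[of _ n n _ n])
  also have "\<dots> = A" using UU A by simp
  finally have "A = U * real_diag_mat n l * mat_adjoint U" unfolding Dl by simp
  moreover have "unitary_mat n U" using U UU unfolding unitary_mat_def by auto
  moreover have "\<forall>i<n. 0 < l i" using Dpos l_def by auto
  ultimately show ?thesis by blast
qed

lemma powr_spec:
  assumes "pos_def_mat n A"
  shows "\<exists>U l. unitary_mat n U \<and> (\<forall>i<n. 0 < l i) \<and> A = U * real_diag_mat n l * mat_adjoint U \<and>
     mat_powr A t = U * real_diag_mat n (\<lambda>i. l i powr t) * mat_adjoint U"
proof -
  have dr: "dim_row A = n" using assms unfolding pos_def_mat_def by auto
  let ?P = "\<lambda>B. \<exists>U l. unitary_mat n U \<and> (\<forall>i<n. 0 < l i) \<and>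
        A = U * real_diag_mat n l * mat_adjoint U \<and>
        B = U * real_diag_mat n (\<lambda>i. l i powr t) * mat_adjoint U"
  have ex: "\<exists>B. ?P B" using posdef_decomp[OF assms] by blast
  have "mat_powr A t = (SOME B. ?P B)" unfolding mat_powr_def Let_def dr ..
  with someI_ex[OF ex] show ?thesis by metis
qed



lemma unit_rows:
  assumes C: "C \<in> carrier_mat n n" and CC: "C * mat_adjoint C = 1\<^sub>m n" and i: "i < n"
  shows "(\<Sum>j<n. (cmod (C $$ (i,j)))^2) = 1"
proof -
  have "complex_of_real (\<Sum>j<n. (cmod (C $$ (i,j)))^2) = (\<Sum>j<n. C $$ (i,j) * cnj (C $$ (i,j)))"
    unfolding of_real_sum by (intro sum.cong refl) (metis complex_norm_square)
  also have "\<dots> = (C * mat_adjoint C) $$ (i,i)" using C i by (simp add: mult_idx index_mult_mat(2,3) del: index_mult_mat)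
  also have "\<dots> = 1" using CC i by simp
  finally show ?thesis by (metis of_real_eq_1_iff)
qed

lemma unit_cols:
  assumes C: "C \<in> carrier_mat n n" and CC: "mat_adjoint C * C = 1\<^sub>m n" and j: "j < n"
  shows "(\<Sum>i<n. (cmod (C $$ (i,j)))^2) = 1"
proof -
  have "complex_of_real (\<Sum>i<n. (cmod (C $$ (i,j)))^2) = (\<Sum>i<n. cnj (C $$ (i,j)) * C $$ (i,j))"
    unfolding of_real_sum by (intro sum.cong refl) (metis complex_norm_square mult.commute)
  also have "\<dots> = (mat_adjoint C * C) $$ (j,j)" using C j by (simp add: mult_idx index_mult_mat(2,3) del: index_mult_mat)
  also have "\<dots> = 1" using CC j by simp
  finally show ?thesis by (metis of_real_eq_1_iff)
qed

lemma trace_formula: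
  assumes U: "U \<in> carrier_mat n n" and V: "V \<in> carrier_mat n n"
  shows "mtrace ((U * real_diag_mat n l * mat_adjoint U) * (V * real_diag_mat n m * mat_adjoint V)) =
    complex_of_real (\<Sum>i<n. \<Sum>j<n. l i * m j * (cmod ((mat_adjoint U * V) $$ (i,j)))^2)"
proof -
  define f where "f a b i j = U$$(a,i) * complex_of_real (l i) * cnj (U$$(b,i)) * (V$$(b,j) * complex_of_real (m j) * cnj (V$$(a,j)))" for a b i j
  have X: "U * real_diag_mat n l * mat_adjoint U \<in> carrier_mat n n" using U by auto
  have "mtrace ((U * real_diag_mat n l * mat_adjoint U) * (V * real_diag_mat n m * mat_adjoint V)) =
     (\<Sum>a<n. \<Sum>b<n. (U * real_diag_mat n l * mat_adjoint U) $$ (a,b) * (V * real_diag_mat n m * mat_adjoint V) $$ (b,a))"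
  proof -
    have Y: "V * real_diag_mat n m * mat_adjoint V \<in> carrier_mat n n" using V by auto
    have "mtrace ((U * real_diag_mat n l * mat_adjoint U) * (V * real_diag_mat n m * mat_adjoint V)) =
      (\<Sum>a<n. ((U * real_diag_mat n l * mat_adjoint U) * (V * real_diag_mat n m * mat_adjoint V)) $$ (a,a))"
    proof -
      have "dim_row ((U * real_diag_mat n l * mat_adjoint U) * (V * real_diag_mat n m * mat_adjoint V)) = n"
        using U by (simp add: carrier_matD)
      thus ?thesis unfolding mtrace_def by simp
    qed
    also have "\<dots> = (\<Sum>a<n. \<Sum>b<n. (U * real_diag_mat n l * mat_adjoint U) $$ (a,b) * (V * real_diag_mat n m * mat_adjoint V) $$ (b,a))"
    proof (rule sum.cong[OF refl])
      fix a assume a: "a \<in> {..<n}"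
      show "((U * real_diag_mat n l * mat_adjoint U) * (V * real_diag_mat n m * mat_adjoint V)) $$ (a,a) =
        (\<Sum>b<n. (U * real_diag_mat n l * mat_adjoint U) $$ (a,b) * (V * real_diag_mat n m * mat_adjoint V) $$ (b,a))"
        using mult_idx_c[OF X Y, of a a] a by auto
    qed
    finally show ?thesis .
  qed
  also have "\<dots> = (\<Sum>a<n. \<Sum>b<n. \<Sum>i<n. \<Sum>j<n. f a b i j)"
    by (intro sum.cong refl) (simp add: decomp_idx[OF U] decomp_idx[OF V] f_def sum_product)
  also have "\<dots> = (\<Sum>a<n. \<Sum>i<n. \<Sum>b<n. \<Sum>j<n. f a b i j)"
    by (rule sum.cong[OF refl], rule sum.swap)
  also have "\<dots> = (\<Sum>i<n. \<Sum>a<n. \<Sum>b<n. \<Sum>j<n. f a b i j)"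
    by (rule sum.swap)
  also have "\<dots> = (\<Sum>i<n. \<Sum>a<n. \<Sum>j<n. \<Sum>b<n. f a b i j)"
    by (rule sum.cong[OF refl], rule sum.cong[OF refl], rule sum.swap)
  also have "\<dots> = (\<Sum>i<n. \<Sum>j<n. \<Sum>a<n. \<Sum>b<n. f a b i j)"
    by (rule sum.cong[OF refl], rule sum.swap)
  also have "\<dots> = (\<Sum>i<n. \<Sum>j<n. complex_of_real (l i * m j * (cmod ((mat_adjoint U * V) $$ (i,j)))^2))"
  proof (intro sum.cong refl)
    fix i j assume i: "i \<in> {..<n}" and j: "j \<in> {..<n}"
    define c where "c = (mat_adjoint U * V) $$ (i,j)"
    have c: "c = (\<Sum>b<n. cnj (U$$(b,i)) * V$$(b,j))" unfolding c_def using U V i j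
      by (simp add: mult_idx index_mult_mat(2,3) del: index_mult_mat)
    have cc: "cnj c = (\<Sum>a<n. U$$(a,i) * cnj (V$$(a,j)))" unfolding c by (simp add: cnj_sum)
    have "(\<Sum>a<n. \<Sum>b<n. f a b i j) = (\<Sum>a<n. \<Sum>b<n. complex_of_real (l i * m j) * ((U$$(a,i) * cnj (V$$(a,j))) * (cnj (U$$(b,i)) * V$$(b,j))))"
      by (intro sum.cong refl) (simp add: f_def algebra_simps)
    also have "\<dots> = complex_of_real (l i * m j) * ((\<Sum>a<n. U$$(a,i) * cnj (V$$(a,j))) * (\<Sum>b<n. cnj (U$$(b,i)) * V$$(b,j)))"
      unfolding sum_product by (simp add: sum_distrib_left)
    also have "\<dots> = complex_of_real (l i * m j) * (cnj c * c)" by (simp only: cc[symmetric] c[symmetric])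
    finally have "(\<Sum>a<n. \<Sum>b<n. f a b i j) = complex_of_real (l i * m j) * (cnj c * c)" .
    also have "cnj c * c = complex_of_real ((cmod c)^2)" by (metis complex_norm_square mult.commute)
    finally show "(\<Sum>a<n. \<Sum>b<n. f a b i j) = complex_of_real (l i * m j * (cmod ((mat_adjoint U * V) $$ (i,j)))^2)"
      unfolding c_def by simp
  qed
  also have "\<dots> = complex_of_real (\<Sum>i<n. \<Sum>j<n. l i * m j * (cmod ((mat_adjoint U * V) $$ (i,j)))^2)"
    by (simp add: of_real_sum)
  finally show ?thesis .
qed



lemma jensen_ln:
  fixes w x :: "'a \<Rightarrow> real"
  assumes S: "finite S" and w: "\<And>k. k \<in> S \<Longrightarrow> 0 \<le> w k" and sw: "(\<Sum>k\<in>S. w k) = 1"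
    and x: "\<And>k. k \<in> S \<Longrightarrow> 0 < x k"
  shows "(\<Sum>k\<in>S. w k * ln (x k)) \<le> ln (\<Sum>k\<in>S. w k * x k)"
proof -
  define M where "M = (\<Sum>k\<in>S. w k * x k)"
  have M0: "0 \<le> M" unfolding M_def using w x by (intro sum_nonneg) (simp add: less_imp_le)
  have "M \<noteq> 0"
  proof
    assume "M = 0"
    hence "\<forall>k\<in>S. w k * x k = 0" unfolding M_def using S w x
      by (subst sum_nonneg_eq_0_iff[symmetric]) (auto simp: less_imp_le)
    hence "\<forall>k\<in>S. w k = 0" using x by fastforce
    hence "(\<Sum>k\<in>S. w k) = 0" by simp
    thus False using sw by simp
  qed
  hence Mpos: "0 < M" using M0 by simp
  have "(\<Sum>k\<in>S. w k * ln (x k)) - ln M = (\<Sum>k\<in>S. w k * ln (x k / M))"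
  proof -
    have "(\<Sum>k\<in>S. w k * ln (x k / M)) = (\<Sum>k\<in>S. w k * ln (x k) - w k * ln M)"
    proof (intro sum.cong refl)
      fix k assume "k \<in> S"
      thus "w k * ln (x k / M) = w k * ln (x k) - w k * ln M"
        using x[OF \<open>k \<in> S\<close>] Mpos by (simp add: ln_div right_diff_distrib)
    qed
    also have "\<dots> = (\<Sum>k\<in>S. w k * ln (x k)) - ln M"
      by (simp add: sum_subtractf sum_distrib_right[symmetric] sw)
    finally show ?thesis by simp
  qed
  also have "\<dots> \<le> (\<Sum>k\<in>S. w k * (x k / M - 1))"
    using w x Mpos by (intro sum_mono mult_left_mono ln_le_minus_one) auto
  also have "\<dots> = (\<Sum>k\<in>S. w k * x k) / M - 1"
    by (simp add: right_diff_distrib sum_subtractf sw sum_divide_distrib)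
  also have "\<dots> = 0" using Mpos unfolding M_def by simp
  finally show ?thesis unfolding M_def by simp
qed

lemma key_ineq:
  fixes l m :: "nat \<Rightarrow> real" and P :: "nat \<Rightarrow> nat \<Rightarrow> real" and d :: nat and \<alpha> :: real
  assumes d: "0 < d" and l: "\<And>i. i < d \<Longrightarrow> 0 < l i" and m: "\<And>j. j < d \<Longrightarrow> 0 < m j"
    and P: "\<And>i j. i < d \<Longrightarrow> j < d \<Longrightarrow> 0 \<le> P i j"
    and rows: "\<And>i. i < d \<Longrightarrow> (\<Sum>j<d. P i j) = 1"
    and cols: "\<And>j. j < d \<Longrightarrow> (\<Sum>i<d. P i j) = 1"
    and sm: "(\<Sum>j<d. m j) = 1" and a: "1 < \<alpha>"
  shows "\<alpha> * ln d + \<alpha> / d * ln (\<Prod>i<d. l i) \<le>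
    ln (\<Sum>i<d. \<Sum>j<d. l i powr \<alpha> * m j powr (1 - \<alpha>) * P i j)"
proof -
  let ?S = "{..<d} \<times> {..<d}"
  define w where "w = (\<lambda>(i,j). P i j / d)"
  define x where "x = (\<lambda>(i,j). l i powr \<alpha> * m j powr (1 - \<alpha>))"
  have sw: "(\<Sum>k\<in>?S. w k) = 1"
  proof -
    have "(\<Sum>k\<in>?S. w k) = (\<Sum>i<d. \<Sum>j<d. P i j / d)"
      unfolding w_def by (simp add: sum.cartesian_product)
    also have "\<dots> = (\<Sum>i<d. 1 / d)" using rows by (simp add: sum_divide_distrib[symmetric])
    also have "\<dots> = 1" using d by simp
    finally show ?thesis .
  qed
  have wnn: "0 \<le> w k" if "k \<in> ?S" for k using that P d by (auto simp: w_def)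
  have xpos: "0 < x k" if kS: "k \<in> ?S" for k
  proof -
    obtain a b where k: "k = (a,b)" "a < d" "b < d" using kS by (cases k) auto
    show ?thesis using l[OF k(2)] m[OF k(3)] unfolding k(1) x_def by simp
  qed
  have J: "(\<Sum>k\<in>?S. w k * ln (x k)) \<le> ln (\<Sum>k\<in>?S. w k * x k)"
    by (rule jensen_ln[OF _ wnn sw xpos]) auto
  have T: "(\<Sum>k\<in>?S. w k * x k) = (\<Sum>i<d. \<Sum>j<d. l i powr \<alpha> * m j powr (1 - \<alpha>) * P i j) / d"
  proof -
    have "(\<Sum>k\<in>?S. w k * x k) = (\<Sum>i<d. \<Sum>j<d. P i j / d * (l i powr \<alpha> * m j powr (1-\<alpha>)))"
      unfolding w_def x_def sum.cartesian_product by (intro sum.cong refl) auto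
    also have "\<dots> = (\<Sum>i<d. \<Sum>j<d. l i powr \<alpha> * m j powr (1 - \<alpha>) * P i j) / d"
      unfolding sum_divide_distrib by (intro sum.cong refl) simp
    finally show ?thesis .
  qed
  have L: "(\<Sum>k\<in>?S. w k * ln (x k)) = \<alpha> / d * (\<Sum>i<d. ln (l i)) + (1 - \<alpha>) / d * (\<Sum>j<d. ln (m j))"
  proof -
    have "(\<Sum>k\<in>?S. w k * ln (x k)) = (\<Sum>i<d. \<Sum>j<d. \<alpha> / d * (ln (l i) * P i j) + (1 - \<alpha>) / d * (ln (m j) * P i j))"
      unfolding w_def x_def sum.cartesian_product
    proof (intro sum.cong refl)
      fix k assume "k \<in> ?S"
      then obtain a b where k: "k = (a,b)" "a < d" "b < d" by (cases k) auto
      show "(case k of (i, j) \<Rightarrow> P i j / real d) * ln (case k of (i, j) \<Rightarrow> l i powr \<alpha> * m j powr (1 - \<alpha>)) =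
        (case k of (i, j) \<Rightarrow> \<alpha> / d * (ln (l i) * P i j) + (1 - \<alpha>) / d * (ln (m j) * P i j))"
      proof -
        have e: "ln (l a powr \<alpha> * m b powr (1-\<alpha>)) = \<alpha> * ln (l a) + (1-\<alpha>) * ln (m b)"
          using l[OF k(2)] m[OF k(3)] by (simp add: ln_mult ln_powr)
        have "P a b / d * (\<alpha> * ln (l a) + (1 - \<alpha>) * ln (m b)) = \<alpha> / d * (ln (l a) * P a b) + (1 - \<alpha>) / d * (ln (m b) * P a b)"
          by (simp add: divide_inverse algebra_simps)
        thus ?thesis unfolding k(1) by (simp add: e)
      qed
    qed
    also have "\<dots> = \<alpha> / d * (\<Sum>i<d. ln (l i) * (\<Sum>j<d. P i j)) + (1 - \<alpha>) / d * (\<Sum>j<d. ln (m j) * (\<Sum>i<d. P i j))"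
    proof -
      have "(\<Sum>i<d. \<Sum>j<d. \<alpha> / d * (ln (l i) * P i j) + (1 - \<alpha>) / d * (ln (m j) * P i j)) =
        (\<Sum>i<d. \<Sum>j<d. \<alpha> / d * (ln (l i) * P i j)) + (\<Sum>i<d. \<Sum>j<d. (1 - \<alpha>) / d * (ln (m j) * P i j))"
        by (simp only: sum.distrib)
      also have "(\<Sum>i<d. \<Sum>j<d. (1 - \<alpha>) / d * (ln (m j) * P i j)) = (\<Sum>j<d. \<Sum>i<d. (1 - \<alpha>) / d * (ln (m j) * P i j))"
        by (rule sum.swap)
      finally show ?thesis by (simp only: sum_distrib_left)
    qed
    also have "\<dots> = \<alpha> / d * (\<Sum>i<d. ln (l i)) + (1 - \<alpha>) / d * (\<Sum>j<d. ln (m j))"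
      using rows cols by simp
    finally show ?thesis .
  qed
  have Jm: "(\<Sum>j<d. 1 / d * ln (m j)) \<le> ln (\<Sum>j<d. 1 / d * m j)"
    by (rule jensen_ln) (use d m in auto)
  hence "(\<Sum>j<d. ln (m j)) / d \<le> - ln d"
    using sm d by (simp add: sum_distrib_left[symmetric] sum_divide_distrib[symmetric] ln_div)
  hence lm: "(\<Sum>j<d. ln (m j)) \<le> - d * ln d" using d by (simp add: divide_le_eq mult.commute)
  have "(1 - \<alpha>) / d * (\<Sum>j<d. ln (m j)) \<ge> (1 - \<alpha>) / d * (- d * ln d)"
    using a d lm by (intro mult_left_mono_neg) (auto simp: divide_nonpos_pos)
  moreover have "(1 - \<alpha>) / d * (- d * ln d) = (\<alpha> - 1) * ln d" using d by (simp add: field_simps)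
  ultimately have lm2: "(1 - \<alpha>) / d * (\<Sum>j<d. ln (m j)) \<ge> (\<alpha> - 1) * ln d" by simp
  have lp: "ln (\<Prod>i<d. l i) = (\<Sum>i<d. ln (l i))" by (rule ln_prod) (auto dest: l)
  have "ln (\<Sum>k\<in>?S. w k * x k) = ln (\<Sum>i<d. \<Sum>j<d. l i powr \<alpha> * m j powr (1 - \<alpha>) * P i j) - ln d"
  proof -
    have pos: "0 < (\<Sum>k\<in>?S. w k * x k)"
    proof -
      have "0 \<le> (\<Sum>k\<in>?S. w k * x k)" using wnn xpos by (intro sum_nonneg) (simp add: less_imp_le)
      moreover have "(\<Sum>k\<in>?S. w k * x k) \<noteq> 0"
      proof
        assume z: "(\<Sum>k\<in>?S. w k * x k) = 0"
        have "\<forall>k\<in>?S. w k * x k = 0" using z wnn xpos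
          by (subst sum_nonneg_eq_0_iff[symmetric]) (auto simp: less_imp_le)
        hence "\<forall>k\<in>?S. w k = 0" using xpos by fastforce
        hence "(\<Sum>k\<in>?S. w k) = 0" by (intro sum.neutral) blast
        thus False using sw by simp
      qed
      ultimately show ?thesis by simp
    qed
    hence Tpos: "0 < (\<Sum>i<d. \<Sum>j<d. l i powr \<alpha> * m j powr (1 - \<alpha>) * P i j)"
      unfolding T using d by (simp add: zero_less_divide_iff)
    show ?thesis unfolding T using d Tpos by (simp add: ln_div)
  qed
  with J L lm2 lp show ?thesis by (simp add: algebra_simps)
qed



lemma sum_split: fixes a b :: nat shows "(\<Sum>x<a*b. f x) = (\<Sum>i<a. \<Sum>k<b. f (i*b+k))"
proof -
  have "(\<Sum>x<a*b. f x) = (\<Sum>i<a. sum f {i*b..<i*b+b})" by (rule sum.nat_group[symmetric])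
  also have "\<dots> = (\<Sum>i<a. \<Sum>k<b. f (i*b+k))"
  proof (rule sum.cong[OF refl])
    fix i assume "i \<in> {..<a}"
    have "sum f {0 + i*b..<b + i*b} = (\<Sum>k = 0..<b. f (k + i*b))" by (rule sum.shift_bounds_nat_ivl)
    thus "sum f {i*b..<i*b+b} = (\<Sum>k<b. f (i*b+k))" by (simp add: add.commute atLeast0LessThan[symmetric])
  qed
  finally show ?thesis .
qed

lemma kron_dim[simp]: "dim_row (kron_mat A B) = dim_row A * dim_row B" "dim_col (kron_mat A B) = dim_col A * dim_col B"
  unfolding kron_mat_def by auto

lemma kron_idx: "i < dim_row A * dim_row B \<Longrightarrow> j < dim_col A * dim_col B \<Longrightarrow>
  kron_mat A B $$ (i,j) = A $$ (i div dim_row B, j div dim_col B) * B $$ (i mod dim_row B, j mod dim_col B)"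
  unfolding kron_mat_def by auto

lemma kron_carrier: "A \<in> carrier_mat a a' \<Longrightarrow> B \<in> carrier_mat b b' \<Longrightarrow> kron_mat A B \<in> carrier_mat (a*b) (a'*b')"
  by (intro carrier_matI) auto

lemma divmod_bounds: "i < a * (b::nat) \<Longrightarrow> i div b < a \<and> i mod b < b"
  by (metis less_mult_imp_div_less mod_less_divisor mult_zero_right not_gr_zero not_less_zero)

lemma idx_bound: "p < a \<Longrightarrow> q < b \<Longrightarrow> p*b+q < a*(b::nat)"
proof -
  assume p: "p < a" and q: "q < b"
  have "p*b+q < p*b+b" using q by simp
  also have "\<dots> = Suc p * b" by simp
  also have "\<dots> \<le> a * b" using p by (intro mult_le_mono1) simp
  finally show ?thesis .
qed

lemma kron_mult:
  assumes A: "A \<in> carrier_mat a a'" and B: "B \<in> carrier_mat b b'" and C: "C \<in> carrier_mat a' a''"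
    and D: "D \<in> carrier_mat b' b''"
  shows "kron_mat A B * kron_mat C D = kron_mat (A * C) (B * D :: complex mat)"
proof (rule eq_matI)
  fix i j assume "i < dim_row (kron_mat (A * C) (B * D))" "j < dim_col (kron_mat (A * C) (B * D))"
  hence i: "i < a * b" and j: "j < a'' * b''" using A B C D by auto
  have ib: "i div b < a" "i mod b < b" using divmod_bounds[OF i] by auto
  have jb: "j div b'' < a''" "j mod b'' < b''" using divmod_bounds[OF j] by auto
  have "(kron_mat A B * kron_mat C D) $$ (i,j) = (\<Sum>x<a'*b'. kron_mat A B $$ (i,x) * kron_mat C D $$ (x,j))"
    by (rule mult_idx_c[OF kron_carrier[OF A B] kron_carrier[OF C D] i j])
  also have "\<dots> = (\<Sum>p<a'. \<Sum>q<b'. kron_mat A B $$ (i,p*b'+q) * kron_mat C D $$ (p*b'+q,j))"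
    by (rule sum_split)
  also have "\<dots> = (\<Sum>p<a'. \<Sum>q<b'. (A $$ (i div b, p) * C $$ (p, j div b'')) * (B $$ (i mod b, q) * D $$ (q, j mod b'')))"
  proof (intro sum.cong refl)
    fix p q assume p: "p \<in> {..<a'}" and q: "q \<in> {..<b'}"
    have pq: "p*b'+q < a'*b'" using p q idx_bound by simp
    have d: "(p*b'+q) div b' = p" "(p*b'+q) mod b' = q" using q by auto
    show "kron_mat A B $$ (i,p*b'+q) * kron_mat C D $$ (p*b'+q,j) = (A $$ (i div b, p) * C $$ (p, j div b'')) * (B $$ (i mod b, q) * D $$ (q, j mod b''))"
      using A B C D i j pq d by (simp add: kron_idx)
  qed
  also have "\<dots> = (\<Sum>p<a'. A $$ (i div b, p) * C $$ (p, j div b'')) * (\<Sum>q<b'. B $$ (i mod b, q) * D $$ (q, j mod b''))"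
    by (simp add: sum_product)
  also have "\<dots> = kron_mat (A * C) (B * D) $$ (i,j)"
    using A B C D i j ib jb by (simp del: index_mult_mat add: index_mult_mat(2,3) kron_idx mult_idx_c[of _ a a' _ a''] mult_idx_c[of _ b b' _ b''])
  finally show "(kron_mat A B * kron_mat C D) $$ (i,j) = kron_mat (A * C) (B * D) $$ (i,j)" .
qed (use A B C D in auto)

lemma kron_adj: "mat_adjoint (kron_mat A B) = kron_mat (mat_adjoint A) (mat_adjoint (B::complex mat))"
proof (rule eq_matI)
  fix i j assume "i < dim_row (kron_mat (mat_adjoint A) (mat_adjoint B))" "j < dim_col (kron_mat (mat_adjoint A) (mat_adjoint B))"
  hence i: "i < dim_col A * dim_col B" and j: "j < dim_row A * dim_row B" by auto
  show "mat_adjoint (kron_mat A B) $$ (i,j) = kron_mat (mat_adjoint A) (mat_adjoint B) $$ (i,j)"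
    using divmod_bounds[OF i] divmod_bounds[OF j] i j by (simp add: kron_idx)
qed auto

lemma kron_one: "0 < b \<Longrightarrow> kron_mat (1\<^sub>m a) (1\<^sub>m b) = (1\<^sub>m (a*b) :: complex mat)"
proof (rule eq_matI)
  fix i j assume "0 < b" "i < dim_row (1\<^sub>m (a*b) :: complex mat)" "j < dim_col (1\<^sub>m (a*b) :: complex mat)"
  hence i: "i < a*b" and j: "j < a*b" by auto
  have "(i div b = j div b \<and> i mod b = j mod b) = (i = j)" by (metis div_mult_mod_eq)
  thus "kron_mat (1\<^sub>m a) (1\<^sub>m b) $$ (i,j) = (1\<^sub>m (a*b) :: complex mat) $$ (i,j)"
    using divmod_bounds[OF i] divmod_bounds[OF j] i j by (auto simp: kron_idx)
qed auto

lemma kron_diag: "0 < b \<Longrightarrow> kron_mat (real_diag_mat a l1) (real_diag_mat b l2) = real_diag_mat (a*b) (\<lambda>x. l1 (x div b) * l2 (x mod b))"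
proof (rule eq_matI)
  fix i j assume "0 < b" "i < dim_row (real_diag_mat (a*b) (\<lambda>x. l1 (x div b) * l2 (x mod b)))"
    "j < dim_col (real_diag_mat (a*b) (\<lambda>x. l1 (x div b) * l2 (x mod b)))"
  hence i: "i < a*b" and j: "j < a*b" by auto
  have "(i div b = j div b \<and> i mod b = j mod b) = (i = j)" by (metis div_mult_mod_eq)
  thus "kron_mat (real_diag_mat a l1) (real_diag_mat b l2) $$ (i,j) = real_diag_mat (a*b) (\<lambda>x. l1 (x div b) * l2 (x mod b)) $$ (i,j)"
    using divmod_bounds[OF i] divmod_bounds[OF j] i j by (auto simp: kron_idx real_diag_mat_def)
qed auto

lemma kron_trace: "A \<in> carrier_mat a a \<Longrightarrow> B \<in> carrier_mat b b \<Longrightarrow> mtrace (kron_mat A B) = mtrace A * mtrace B"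
proof -
  assume A: "A \<in> carrier_mat a a" and B: "B \<in> carrier_mat b b"
  have "mtrace (kron_mat A B) = (\<Sum>x<a*b. kron_mat A B $$ (x,x))" unfolding mtrace_def using A B by simp
  also have "\<dots> = (\<Sum>i<a. \<Sum>k<b. kron_mat A B $$ (i*b+k,i*b+k))" by (rule sum_split)
  also have "\<dots> = (\<Sum>i<a. \<Sum>k<b. A $$ (i,i) * B $$ (k,k))"
  proof (intro sum.cong refl)
    fix i k assume i: "i \<in> {..<a}" and k: "k \<in> {..<b}"
    have ik: "i*b+k < a*b" using i k idx_bound by simp
    show "kron_mat A B $$ (i*b+k,i*b+k) = A $$ (i,i) * B $$ (k,k)" using A B ik k by (simp add: kron_idx)
  qed
  also have "\<dots> = mtrace A * mtrace B" unfolding mtrace_def using A B by (simp add: sum_product)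
  finally show ?thesis .
qed



lemma quad_form:
  assumes w: "w \<in> carrier_vec N" and A: "A \<in> carrier_mat N N"
  shows "conjugate w \<bullet> (A *\<^sub>v w) = (\<Sum>x<N. \<Sum>y<N. cnj (w$x) * A$$(x,y) * w$y)"
  using w A by (simp add: scalar_prod_def lessThan_atLeast0 sum_distrib_left mult.assoc)

lemma sum_sel:
  fixes dA dB k :: nat
  assumes k: "k < dB"
  shows "(\<Sum>x<dA*dB. if x mod dB = k then h x else 0) = (\<Sum>i<dA. h (i*dB+k))"
proof -
  have "(\<Sum>x<dA*dB. if x mod dB = k then h x else 0) = (\<Sum>i<dA. \<Sum>k1<dB. if (i*dB+k1) mod dB = k then h (i*dB+k1) else 0)"
    by (rule sum_split)
  also have "\<dots> = (\<Sum>i<dA. \<Sum>k1<dB. if k1 = k then h (i*dB+k1) else 0)"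
    by (intro sum.cong refl) auto
  also have "\<dots> = (\<Sum>i<dA. h (i*dB+k))" using k by simp
  finally show ?thesis .
qed

lemma ptrace_carrier: "ptrace_B dA dB R \<in> carrier_mat dA dA"
  unfolding ptrace_B_def by auto

lemma ptrace_idx: "i < dA \<Longrightarrow> j < dA \<Longrightarrow> ptrace_B dA dB R $$ (i,j) = (\<Sum>k<dB. R $$ (i * dB + k, j * dB + k))"
  unfolding ptrace_B_def by auto

lemma ptrace_trace: "R \<in> carrier_mat (dA*dB) (dA*dB) \<Longrightarrow> mtrace (ptrace_B dA dB R) = mtrace R"
proof -
  assume R: "R \<in> carrier_mat (dA*dB) (dA*dB)"
  have "mtrace (ptrace_B dA dB R) = (\<Sum>i<dA. \<Sum>k<dB. R $$ (i * dB + k, i * dB + k))"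
    unfolding mtrace_def using ptrace_carrier[of dA dB R] by (simp add: ptrace_idx)
  also have "\<dots> = mtrace R" unfolding mtrace_def using R by (simp add: sum_split)
  finally show ?thesis .
qed

lemma ptrace_posdef:
  assumes R: "pos_def_mat (dA*dB) R" and dB: "0 < dB"
  shows "pos_def_mat dA (ptrace_B dA dB R)"
proof -
  let ?N = "dA*dB"
  let ?P = "ptrace_B dA dB R"
  have Rc: "R \<in> carrier_mat ?N ?N" and hR: "mat_adjoint R = R"
    and pos: "\<And>v. v \<in> carrier_vec ?N \<Longrightarrow> v \<noteq> 0\<^sub>v ?N \<Longrightarrow> 0 < Re (conjugate v \<bullet> (R *\<^sub>v v))"
    using R unfolding pos_def_mat_def hermitian_mat_def by auto
  have Pc: "?P \<in> carrier_mat dA dA" by (rule ptrace_carrier)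
  have hP: "mat_adjoint ?P = ?P"
  proof (rule eq_matI)
    fix i j assume "i < dim_row ?P" "j < dim_col ?P"
    hence i: "i < dA" and j: "j < dA" using Pc by auto
    have "mat_adjoint ?P $$ (i,j) = (\<Sum>k<dB. cnj (R $$ (j * dB + k, i * dB + k)))"
      using i j Pc by (simp add: ptrace_idx cnj_sum)
    also have "\<dots> = (\<Sum>k<dB. R $$ (i * dB + k, j * dB + k))"
    proof (intro sum.cong refl)
      fix k assume "k \<in> {..<dB}"
      hence "i * dB + k < ?N" "j * dB + k < ?N" using i j idx_bound by auto
      thus "cnj (R $$ (j * dB + k, i * dB + k)) = R $$ (i * dB + k, j * dB + k)"
        using arg_cong[OF hR, of "\<lambda>M. M $$ (i * dB + k, j * dB + k)"] Rc by simp
    qed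
    finally show "mat_adjoint ?P $$ (i,j) = ?P $$ (i,j)" using i j by (simp add: ptrace_idx)
  qed (use Pc in auto)
  have "0 < Re (conjugate v \<bullet> (?P *\<^sub>v v))" if v: "v \<in> carrier_vec dA" and v0: "v \<noteq> 0\<^sub>v dA" for v
  proof -
    define w where "w k = vec ?N (\<lambda>x. if x mod dB = k then v $ (x div dB) else 0)" for k
    have wc: "w k \<in> carrier_vec ?N" for k unfolding w_def by auto
    have Qw: "conjugate (w k) \<bullet> (R *\<^sub>v w k) = (\<Sum>i<dA. \<Sum>j<dA. cnj (v$i) * R $$ (i*dB+k, j*dB+k) * v$j)"
      if k: "k < dB" for k
    proof -
      have "conjugate (w k) \<bullet> (R *\<^sub>v w k) = (\<Sum>x<?N. \<Sum>y<?N. cnj (w k $x) * R$$(x,y) * w k $y)"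
        by (rule quad_form[OF wc Rc])
      also have "\<dots> = (\<Sum>x<?N. if x mod dB = k then (\<Sum>y<?N. if y mod dB = k then cnj (v $ (x div dB)) * R$$(x,y) * v $ (y div dB) else 0) else 0)"
        by (intro sum.cong refl) (auto simp: w_def intro!: sum.cong)
      also have "\<dots> = (\<Sum>i<dA. (\<Sum>y<?N. if y mod dB = k then cnj (v $ ((i*dB+k) div dB)) * R$$(i*dB+k,y) * v $ (y div dB) else 0))"
        by (rule sum_sel[OF k])
      also have "\<dots> = (\<Sum>i<dA. \<Sum>j<dA. cnj (v $ ((i*dB+k) div dB)) * R$$(i*dB+k,j*dB+k) * v $ ((j*dB+k) div dB))"
        by (rule sum.cong[OF refl]) (rule sum_sel[OF k])
      also have "\<dots> = (\<Sum>i<dA. \<Sum>j<dA. cnj (v$i) * R $$ (i*dB+k, j*dB+k) * v$j)"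
        using k by simp
      finally show ?thesis .
    qed
    have "conjugate v \<bullet> (?P *\<^sub>v v) = (\<Sum>i<dA. \<Sum>j<dA. cnj (v$i) * ?P $$ (i,j) * v$j)"
      by (rule quad_form[OF v Pc])
    also have "\<dots> = (\<Sum>k<dB. \<Sum>i<dA. \<Sum>j<dA. cnj (v$i) * R $$ (i*dB+k, j*dB+k) * v$j)"
    proof -
      have "(\<Sum>i<dA. \<Sum>j<dA. cnj (v$i) * ?P $$ (i,j) * v$j) = (\<Sum>i<dA. \<Sum>j<dA. \<Sum>k<dB. cnj (v$i) * R $$ (i*dB+k, j*dB+k) * v$j)"
        by (intro sum.cong refl) (simp add: ptrace_idx sum_distrib_left sum_distrib_right)
      also have "\<dots> = (\<Sum>i<dA. \<Sum>k<dB. \<Sum>j<dA. cnj (v$i) * R $$ (i*dB+k, j*dB+k) * v$j)"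
        by (rule sum.cong[OF refl], rule sum.swap)
      also have "\<dots> = (\<Sum>k<dB. \<Sum>i<dA. \<Sum>j<dA. cnj (v$i) * R $$ (i*dB+k, j*dB+k) * v$j)"
        by (rule sum.swap)
      finally show ?thesis .
    qed
    also have "\<dots> = (\<Sum>k<dB. conjugate (w k) \<bullet> (R *\<^sub>v w k))"
      by (intro sum.cong refl) (simp add: Qw)
    finally have eq: "Re (conjugate v \<bullet> (?P *\<^sub>v v)) = (\<Sum>k<dB. Re (conjugate (w k) \<bullet> (R *\<^sub>v w k)))"
      by (simp add: Re_sum)
    obtain i where i: "i < dA" "v $ i \<noteq> 0" using v v0 by (metis carrier_vecD eq_vecI index_zero_vec(1,2))
    have wpos: "0 < Re (conjugate (w k) \<bullet> (R *\<^sub>v w k))" if k: "k < dB" for k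
    proof (rule pos[OF wc])
      have "i*dB+k < ?N" using i k idx_bound by auto
      hence "w k $ (i*dB+k) = v $ i" using k by (simp add: w_def)
      thus "w k \<noteq> 0\<^sub>v ?N" using i \<open>i*dB+k < ?N\<close> by auto
    qed
    have "0 < (\<Sum>k<dB. Re (conjugate (w k) \<bullet> (R *\<^sub>v w k)))"
      using dB wpos by (intro sum_pos) auto
    thus ?thesis using eq by simp
  qed
  thus ?thesis unfolding pos_def_mat_def hermitian_mat_def using Pc hP by auto
qed



lemma prod_list_upt: "prod_list (map f [0..<n]) = prod f {..<n}"
  by (simp add: prod.distinct_set_conv_list[symmetric] atLeast0LessThan)

lemma decomp_trace:
  assumes U: "unitary_mat n U"
  shows "mtrace (U * real_diag_mat n l * mat_adjoint U) = complex_of_real (\<Sum>i<n. l i)"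
proof -
  have Uc: "U \<in> carrier_mat n n" using U unfolding unitary_mat_def by auto
  have "mtrace (U * real_diag_mat n l * mat_adjoint U) = (\<Sum>a<n. \<Sum>i<n. U$$(a,i) * complex_of_real (l i) * cnj (U$$(a,i)))"
  proof -
    have dr: "dim_row (U * real_diag_mat n l * mat_adjoint U) = n" using Uc by simp
    show ?thesis unfolding mtrace_def dr by (intro sum.cong refl) (simp add: decomp_idx[OF Uc])
  qed
  also have "\<dots> = (\<Sum>i<n. \<Sum>a<n. complex_of_real (l i) * complex_of_real ((cmod (U$$(a,i)))^2))"
    by (subst sum.swap) (intro sum.cong refl, metis (no_types, lifting) complex_norm_square mult.assoc mult.commute)
  also have "\<dots> = (\<Sum>i<n. complex_of_real (l i) * complex_of_real (\<Sum>a<n. (cmod (U$$(a,i)))^2))"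
    by (simp add: sum_distrib_left of_real_sum)
  also have "\<dots> = (\<Sum>i<n. complex_of_real (l i))"
    using unit_cols[OF Uc unitary_adj[OF U]] by simp
  finally show ?thesis by (simp add: of_real_sum)
qed

lemma decomp_det:
  assumes U: "unitary_mat n U"
  shows "det (U * real_diag_mat n l * mat_adjoint U) = complex_of_real (\<Prod>i<n. l i)"
proof -
  have Uc: "U \<in> carrier_mat n n" and UU: "U * mat_adjoint U = 1\<^sub>m n" using U unfolding unitary_mat_def by auto
  have "det (U * real_diag_mat n l * mat_adjoint U) = det U * det (real_diag_mat n l) * det (mat_adjoint U)"
    using Uc by (simp add: det_mult[of _ n])
  also have "\<dots> = det (real_diag_mat n l) * (det U * det (mat_adjoint U))" by (simp add: algebra_simps)
  also have "det U * det (mat_adjoint U) = 1" using det_mult[of U n "mat_adjoint U"] Uc UU by simp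
  also have "det (real_diag_mat n l) = complex_of_real (\<Prod>i<n. l i)"
  proof -
    have "upper_triangular (real_diag_mat n l)" unfolding upper_triangular_def by (auto simp: real_diag_mat_def)
    hence "det (real_diag_mat n l) = prod_list (diag_mat (real_diag_mat n l))" by (rule det_upper_triangular[of _ n]) simp
    also have "\<dots> = (\<Prod>i<n. complex_of_real (l i))" unfolding diag_mat_def
      by (simp add: prod_list_upt real_diag_mat_def)
    finally show ?thesis by (simp add: of_real_prod)
  qed
  finally show ?thesis by simp
qed

lemma kron_decomp:
  assumes U1: "unitary_mat a U1" and U2: "unitary_mat b U2" and b: "0 < b"
    and l1: "\<forall>i<a. 0 < l1 i" and l2: "\<forall>i<b. 0 < l2 i"
  shows "\<exists>W m. unitary_mat (a*b) W \<and> (\<forall>i<a*b. 0 < m i) \<and>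
     kron_mat (U1 * real_diag_mat a l1 * mat_adjoint U1) (U2 * real_diag_mat b l2 * mat_adjoint U2)
       = W * real_diag_mat (a*b) m * mat_adjoint W"
proof -
  have U1c: "U1 \<in> carrier_mat a a" and U1U: "U1 * mat_adjoint U1 = 1\<^sub>m a" using U1 unfolding unitary_mat_def by auto
  have U2c: "U2 \<in> carrier_mat b b" and U2U: "U2 * mat_adjoint U2 = 1\<^sub>m b" using U2 unfolding unitary_mat_def by auto
  define W where "W = kron_mat U1 U2"
  define m where "m x = l1 (x div b) * l2 (x mod b)" for x
  have Wc: "W \<in> carrier_mat (a*b) (a*b)" unfolding W_def using kron_carrier[OF U1c U2c] .
  have "W * mat_adjoint W = kron_mat (U1 * mat_adjoint U1) (U2 * mat_adjoint U2)"
    unfolding W_def kron_adj by (rule kron_mult[OF U1c U2c]) (use U1c U2c in auto)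
  hence WU: "unitary_mat (a*b) W" unfolding unitary_mat_def using Wc U1U U2U kron_one[OF b] by simp
  have mpos: "\<forall>i<a*b. 0 < m i" using l1 l2 divmod_bounds unfolding m_def by (auto intro!: mult_pos_pos)
  have "kron_mat (U1 * real_diag_mat a l1 * mat_adjoint U1) (U2 * real_diag_mat b l2 * mat_adjoint U2)
     = kron_mat (U1 * real_diag_mat a l1) (U2 * real_diag_mat b l2) * kron_mat (mat_adjoint U1) (mat_adjoint U2)"
    by (rule kron_mult[symmetric]) (use U1c U2c in auto)
  also have "kron_mat (U1 * real_diag_mat a l1) (U2 * real_diag_mat b l2) = W * kron_mat (real_diag_mat a l1) (real_diag_mat b l2)"
    unfolding W_def by (rule kron_mult[symmetric]) (use U1c U2c in auto)
  also have "kron_mat (real_diag_mat a l1) (real_diag_mat b l2) = real_diag_mat (a*b) m"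
    unfolding m_def by (rule kron_diag[OF b])
  also have "kron_mat (mat_adjoint U1) (mat_adjoint U2) = mat_adjoint W" unfolding W_def kron_adj ..
  finally show ?thesis using WU mpos by blast
qed

lemma powr_spec2:
  assumes "dim_row A = n" and "\<exists>U l. unitary_mat n U \<and> (\<forall>i<n. 0 < l i) \<and> A = U * real_diag_mat n l * mat_adjoint U"
  shows "\<exists>U l. unitary_mat n U \<and> (\<forall>i<n. 0 < l i) \<and> A = U * real_diag_mat n l * mat_adjoint U \<and>
     mat_powr A t = U * real_diag_mat n (\<lambda>i. l i powr t) * mat_adjoint U"
proof -
  let ?P = "\<lambda>B. \<exists>U l. unitary_mat n U \<and> (\<forall>i<n. 0 < l i) \<and>
        A = U * real_diag_mat n l * mat_adjoint U \<and>
        B = U * real_diag_mat n (\<lambda>i. l i powr t) * mat_adjoint U"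
  have ex: "\<exists>B. ?P B" using assms(2) by blast
  have "mat_powr A t = (SOME B. ?P B)" unfolding mat_powr_def Let_def assms(1) ..
  with someI_ex[OF ex] show ?thesis by metis
qed



lemma diag_posdef:
  assumes l: "\<forall>i<n. 0 < l i"
  shows "pos_def_mat n (real_diag_mat n l)"
proof -
  have c: "real_diag_mat n l \<in> carrier_mat n n" by simp
  have h: "mat_adjoint (real_diag_mat n l) = real_diag_mat n l"
    by (rule eq_matI) (auto simp: real_diag_mat_def)
  have "0 < Re (conjugate v \<bullet> (real_diag_mat n l *\<^sub>v v))" if v: "v \<in> carrier_vec n" and v0: "v \<noteq> 0\<^sub>v n" for v
  proof -
    have "conjugate v \<bullet> (real_diag_mat n l *\<^sub>v v) = (\<Sum>x<n. \<Sum>y<n. cnj (v$x) * real_diag_mat n l $$(x,y) * v$y)"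
      by (rule quad_form[OF v c])
    also have "\<dots> = (\<Sum>x<n. complex_of_real (l x * (cmod (v$x))^2))"
    proof (intro sum.cong refl)
      fix x assume x: "x \<in> {..<n}"
      have "(\<Sum>y<n. cnj (v$x) * real_diag_mat n l $$(x,y) * v$y) = (\<Sum>y<n. if y = x then cnj (v$x) * complex_of_real (l x) * v$x else 0)"
        using x by (intro sum.cong refl) (auto simp: real_diag_mat_def)
      also have "\<dots> = cnj (v$x) * complex_of_real (l x) * v$x" using x by simp
      also have "\<dots> = complex_of_real (l x * (cmod (v$x))^2)"
        by (simp only: of_real_mult complex_norm_square) (simp add: algebra_simps)
      finally show "(\<Sum>y<n. cnj (v$x) * real_diag_mat n l $$(x,y) * v$y) = complex_of_real (l x * (cmod (v$x))^2)" .
    qed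
    finally have eq: "Re (conjugate v \<bullet> (real_diag_mat n l *\<^sub>v v)) = (\<Sum>x<n. l x * (cmod (v$x))^2)"
      by (simp add: Re_sum)
    obtain i where i: "i < n" "v $ i \<noteq> 0" using v v0 by (metis carrier_vecD eq_vecI index_zero_vec(1,2))
    have "0 < (\<Sum>x<n. l x * (cmod (v$x))^2)"
    proof (rule sum_pos2[of _ i])
      show "0 < l i * (cmod (v$i))^2" using i l by simp
      show "\<And>x. x \<in> {..<n} \<Longrightarrow> 0 \<le> l x * (cmod (v$x))^2" using l by (simp add: less_imp_le)
    qed (use i in auto)
    thus ?thesis using eq by simp
  qed
  thus ?thesis unfolding pos_def_mat_def hermitian_mat_def using c h by auto
qed

lemma posdef_semidef: "pos_def_mat n A \<Longrightarrow> pos_semidef_mat n A"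
proof -
  assume A: "pos_def_mat n A"
  have "0 \<le> Re (conjugate v \<bullet> (A *\<^sub>v v))" if v: "v \<in> carrier_vec n" for v
  proof (cases "v = 0\<^sub>v n")
    case True
    have Ac: "A \<in> carrier_mat n n" using A unfolding pos_def_mat_def by auto
    have "conjugate v = 0\<^sub>v n" using True by (intro eq_vecI) auto
    hence "conjugate v \<bullet> (A *\<^sub>v v) = 0" using Ac v by simp
    thus ?thesis by simp
  next
    case False thus ?thesis using A v unfolding pos_def_mat_def by (simp add: less_imp_le)
  qed
  thus ?thesis using A unfolding pos_def_mat_def pos_semidef_mat_def by auto
qed

lemma bound_sigma:
  fixes b \<alpha> :: real and dA dB :: nat and \<rho> \<sigma> :: "complex mat"
  assumes b: "1 < b" and rho: "pos_def_mat (dA * dB) \<rho>" and trr: "mtrace \<rho> = 1" and a: "1 < \<alpha>"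
    and sig: "pos_def_mat dB \<sigma>" and trs: "mtrace \<sigma> = 1" and dB: "0 < dB" and dA: "0 < dA"
  shows "\<alpha> / (\<alpha> - 1) * (log b (real (dA * dB)) + 1 / real (dA * dB) * log b (Re (det \<rho>)))
     \<le> renyi_div b \<alpha> \<rho> (kron_mat (ptrace_B dA dB \<rho>) \<sigma>)"
proof -
  define d where "d = dA * dB"
  have d: "0 < d" unfolding d_def using dA dB by simp
  have rc: "\<rho> \<in> carrier_mat d d" using rho unfolding pos_def_mat_def d_def by auto
  obtain U l where U: "unitary_mat d U" and l: "\<forall>i<d. 0 < l i" and rdec: "\<rho> = U * real_diag_mat d l * mat_adjoint U"
    and rpow: "mat_powr \<rho> \<alpha> = U * real_diag_mat d (\<lambda>i. l i powr \<alpha>) * mat_adjoint U"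
    using powr_spec[OF rho[folded d_def], of \<alpha>] by blast
  define rA where "rA = ptrace_B dA dB \<rho>"
  have rA: "pos_def_mat dA rA" unfolding rA_def by (rule ptrace_posdef[OF rho dB])
  obtain U1 l1 where U1: "unitary_mat dA U1" and l1: "\<forall>i<dA. 0 < l1 i" and d1: "rA = U1 * real_diag_mat dA l1 * mat_adjoint U1"
    using posdef_decomp[OF rA] by blast
  obtain U2 l2 where U2: "unitary_mat dB U2" and l2: "\<forall>i<dB. 0 < l2 i" and d2: "\<sigma> = U2 * real_diag_mat dB l2 * mat_adjoint U2"
    using posdef_decomp[OF sig] by blast
  define \<tau> where "\<tau> = kron_mat rA \<sigma>"
  have rAc: "rA \<in> carrier_mat dA dA" unfolding rA_def by (rule ptrace_carrier)
  have sc: "\<sigma> \<in> carrier_mat dB dB" using sig unfolding pos_def_mat_def by auto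
  have tdim: "dim_row \<tau> = d" unfolding \<tau>_def d_def using rAc sc by simp
  have tex: "\<exists>W m. unitary_mat d W \<and> (\<forall>i<d. 0 < m i) \<and> \<tau> = W * real_diag_mat d m * mat_adjoint W"
    unfolding \<tau>_def d1 d2 d_def by (rule kron_decomp[OF U1 U2 dB l1 l2])
  obtain V m where V: "unitary_mat d V" and m: "\<forall>i<d. 0 < m i" and tdec: "\<tau> = V * real_diag_mat d m * mat_adjoint V"
    and tpow: "mat_powr \<tau> (1 - \<alpha>) = V * real_diag_mat d (\<lambda>i. m i powr (1 - \<alpha>)) * mat_adjoint V"
    using powr_spec2[OF tdim tex, of "1 - \<alpha>"] by blast
  have "complex_of_real (\<Sum>i<d. m i) = mtrace \<tau>" using decomp_trace[OF V] tdec by simp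
  also have "\<dots> = mtrace rA * mtrace \<sigma>" unfolding \<tau>_def by (rule kron_trace[OF rAc sc])
  also have "mtrace rA = mtrace \<rho>" unfolding rA_def by (rule ptrace_trace) (use rc d_def in simp)
  finally have sm: "(\<Sum>i<d. m i) = 1" using trr trs by (metis mult_1 of_real_eq_1_iff)
  have det: "Re (det \<rho>) = (\<Prod>i<d. l i)" using decomp_det[OF U] rdec by (simp del: of_real_prod)
  have Uc: "U \<in> carrier_mat d d" and UU: "U * mat_adjoint U = 1\<^sub>m d" using U unfolding unitary_mat_def by auto
  have Vc: "V \<in> carrier_mat d d" and VV: "V * mat_adjoint V = 1\<^sub>m d" using V unfolding unitary_mat_def by auto
  have UU': "mat_adjoint U * U = 1\<^sub>m d" by (rule unitary_adj[OF U])
  have VV': "mat_adjoint V * V = 1\<^sub>m d" by (rule unitary_adj[OF V])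
  define C where "C = mat_adjoint U * V"
  have Cc: "C \<in> carrier_mat d d" unfolding C_def using Uc Vc by auto
  have adjC: "mat_adjoint C = mat_adjoint V * U" unfolding C_def using Uc Vc by (simp add: adj_mult[of _ d d _ d])
  have "C * mat_adjoint C = mat_adjoint U * (V * mat_adjoint V) * U" unfolding adjC unfolding C_def using Uc Vc
    by (simp add: assoc_mult_mat[of _ d d _ d _ d] mult_carrier_mat[of _ d d _ d])
  hence CC: "C * mat_adjoint C = 1\<^sub>m d" using VV UU' Uc by simp
  have "mat_adjoint C * C = mat_adjoint V * (U * mat_adjoint U) * V" unfolding adjC unfolding C_def using Uc Vc
    by (simp add: assoc_mult_mat[of _ d d _ d _ d] mult_carrier_mat[of _ d d _ d])
  hence CC': "mat_adjoint C * C = 1\<^sub>m d" using UU VV' Vc by simp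
  define T where "T = (\<Sum>i<d. \<Sum>j<d. l i powr \<alpha> * m j powr (1 - \<alpha>) * (cmod (C $$ (i,j)))^2)"
  have tr: "Re (mtrace (mat_powr \<rho> \<alpha> * mat_powr \<tau> (1 - \<alpha>))) = T"
    unfolding rpow tpow T_def C_def using trace_formula[OF Uc Vc] by simp
  have key: "\<alpha> * ln d + \<alpha> / d * ln (\<Prod>i<d. l i) \<le> ln T"
    unfolding T_def
    by (rule key_ineq[OF d _ _ _ unit_rows[OF Cc CC] unit_cols[OF Cc CC'] sm a]) (use l m in auto)
  have lb: "0 < ln b" using b by simp
  have "\<alpha> / (\<alpha> - 1) * (log b d + 1 / d * log b (\<Prod>i<d. l i)) = (\<alpha> * ln d + \<alpha> / d * ln (\<Prod>i<d. l i)) / ((\<alpha> - 1) * ln b)"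
    using lb a by (simp add: log_def field_simps)
  also have "\<dots> \<le> ln T / ((\<alpha> - 1) * ln b)"
    using key lb a by (intro divide_right_mono) auto
  also have "\<dots> = 1 / (\<alpha> - 1) * log b T" using lb a by (simp add: log_def field_simps)
  finally show ?thesis unfolding renyi_div_def tr[unfolded \<tau>_def rA_def] det[unfolded d_def]
    by (simp add: d_def)
qed

theorem mainTheorem6:
  fixes b \<alpha> :: real and dA dB :: nat and \<rho> :: "complex mat"
  assumes "1 < b"
    and "pos_def_mat (dA * dB) \<rho>" and "density_mat (dA * dB) \<rho>"
    and "1 < \<alpha>"
  shows "renyi_MI b \<alpha> dA dB \<rho> \<ge>
    \<alpha> / (\<alpha> - 1) * (log b (real (dA * dB)) + 1 / real (dA * dB) * log b (Re (det \<rho>)))"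
proof -
  have rc: "\<rho> \<in> carrier_mat (dA*dB) (dA*dB)" using assms(2) unfolding pos_def_mat_def by auto
  have trr: "mtrace \<rho> = 1" using assms(3) unfolding density_mat_def by auto
  have "dA * dB \<noteq> 0"
  proof
    assume z: "dA * dB = 0"
    have "mtrace \<rho> = (\<Sum>i<dA * dB. \<rho> $$ (i, i))" using rc unfolding mtrace_def by simp
    also have "\<dots> = 0" unfolding z by simp
    finally have "mtrace \<rho> = 0" .
    thus False using trr by simp
  qed
  hence dA: "0 < dA" and dB: "0 < dB" by auto
  define s0 where "s0 = real_diag_mat dB (\<lambda>_. 1 / real dB)"
  have s0p: "pos_def_mat dB s0" unfolding s0_def by (rule diag_posdef) (use dB in auto)
  have "mtrace s0 = 1"
  proof -
    have "mtrace s0 = (\<Sum>i<dB. complex_of_real (1 / real dB))" unfolding mtrace_def s0_def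
      by (intro sum.cong) (auto simp: real_diag_mat_def)
    also have "\<dots> = 1" using dB by simp
    finally show ?thesis .
  qed
  hence "s0 \<in> {\<sigma>. pos_def_mat dB \<sigma> \<and> density_mat dB \<sigma>}"
    using s0p posdef_semidef[OF s0p] unfolding density_mat_def by auto
  hence ne: "{\<sigma>. pos_def_mat dB \<sigma> \<and> density_mat dB \<sigma>} \<noteq> {}" by blast
  show ?thesis unfolding renyi_MI_def
  proof (rule cINF_greatest[OF ne])
    fix \<sigma> assume "\<sigma> \<in> {\<sigma>. pos_def_mat dB \<sigma> \<and> density_mat dB \<sigma>}"
    hence sp: "pos_def_mat dB \<sigma>" and ts: "mtrace \<sigma> = 1" unfolding density_mat_def by auto
    show "\<alpha> / (\<alpha> - 1) * (log b (real (dA * dB)) + 1 / real (dA * dB) * log b (Re (det \<rho>)))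
      \<le> renyi_div b \<alpha> \<rho> (kron_mat (ptrace_B dA dB \<rho>) \<sigma>)"
      by (rule bound_sigma[OF assms(1,2) trr assms(4) sp ts dB dA])
  qed
qed


end
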